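(* Let $d \geq 3$, $s\ge1$, and let $\pi, \sigma$ be permutations of $\{1,\dots,d\}$ such that the cycle decomposition of $\pi^{-1}\sigma$ contains a cycle of length $p$ for some $p \geq 3$. Identifying permutations with their permutation matrices, $$\{\lambda \in [0,1] : (1-\lambda) \pi + \lambda \sigma \in \mathsf U_{d,s}\} = \{\lambda \in [0,1] : (1-\lambda) \pi + \lambda \sigma \in \mathsf L_{d,s}\} = \{k/s : k = 0, \ldots, s\}.$$ In particular, this holds for every edge $[\pi,\sigma]$ of the Birkhoff polytope $\mathsf B_d$.
   Context: $\mathsf B_d$ is the set (Birkhoff polytope) of $d\times d$ bistochastic matrices. For $U\in\mathcal U(ds)$ viewed as a $d\times d$ block matrix with blocks $U_{ij}\in M_s(\mathbb C)$, $\phi_{d,s}(U)=\big(\tfrac1s\|U_{ij}\|_F^2\big)_{i,j=1}^d$ with $\|X\|_F=\operatorname{Tr}(XX^* )^{1/2}$, and $\mathsf U_{d,s}:=\phi_{d,s}(\mathcal U(ds))$. $\mathsf{Brac}_{d,s}$ is the set of pairs of probability vectors $(\alpha,\beta)$ in $\mathbb R^d$ for which there exist $A_1,\dots,A_d,B_1,\dots,B_d\in M_s(\mathbb C)$ with $\sum_i A_iA_i^*=\sum_iB_iB_i^*=I_s$, $\sum_iA_iB_i^*=0$, $\tfrac1s\|A_i\|_F^2=\alpha_i$, $\tfrac1s\|B_i\|_F^2=\beta_i$ for all $i$. $\mathsf L_{d,s}$ is the set of $B\in\mathsf B_d$ all of whose pairs of distinct rows and pairs of distinct columns belong to $\mathsf{Brac}_{d,s}$.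 *)

theory Defs
  imports "HOL-Analysis.Analysis" "HOL-Combinatorics.Orbits"
begin

text \<open>Matrices are represented as functions nat \<Rightarrow> nat \<Rightarrow> _; an n x n matrix is given by
  its entries with indices < n (0-based). Entries outside the range are irrelevant.\<close>

definition unitary_mat :: "nat \<Rightarrow> (nat \<Rightarrow> nat \<Rightarrow> complex) \<Rightarrow> bool" where
  "unitary_mat n U \<longleftrightarrow>
     (\<forall>i<n. \<forall>j<n. (\<Sum>k<n. U i k * cnj (U j k)) = (if i = j then 1 else 0)) \<and>
     (\<forall>i<n. \<forall>j<n. (\<Sum>k<n. cnj (U k i) * U k j) = (if i = j then 1 else 0))"

definition block :: "nat \<Rightarrow> (nat \<Rightarrow> nat \<Rightarrow> complex) \<Rightarrow> nat \<Rightarrow> nat \<Rightarrow> nat \<Rightarrow> nat \<Rightarrow> complex" where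
  "block s U i j = (\<lambda>a b. U (i * s + a) (j * s + b))"

definition frob2 :: "nat \<Rightarrow> (nat \<Rightarrow> nat \<Rightarrow> complex) \<Rightarrow> real" where
  "frob2 s X = (\<Sum>a<s. \<Sum>b<s. (cmod (X a b))\<^sup>2)"

definition phi :: "nat \<Rightarrow> nat \<Rightarrow> (nat \<Rightarrow> nat \<Rightarrow> complex) \<Rightarrow> nat \<Rightarrow> nat \<Rightarrow> real" where
  "phi d s U i j = frob2 s (block s U i j) / real s"

definition Uset :: "nat \<Rightarrow> nat \<Rightarrow> (nat \<Rightarrow> nat \<Rightarrow> real) set" where
  "Uset d s = {B. \<exists>U. unitary_mat (d * s) U \<and> (\<forall>i<d. \<forall>j<d. B i j = phi d s U i j)}"

definition bistochastic :: "nat \<Rightarrow> (nat \<Rightarrow> nat \<Rightarrow> real) \<Rightarrow> bool" where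
  "bistochastic d B \<longleftrightarrow> (\<forall>i<d. \<forall>j<d. 0 \<le> B i j) \<and>
     (\<forall>i<d. (\<Sum>j<d. B i j) = 1) \<and> (\<forall>j<d. (\<Sum>i<d. B i j) = 1)"

definition prob_vec :: "nat \<Rightarrow> (nat \<Rightarrow> real) \<Rightarrow> bool" where
  "prob_vec d \<alpha> \<longleftrightarrow> (\<forall>i<d. 0 \<le> \<alpha> i) \<and> (\<Sum>i<d. \<alpha> i) = 1"

definition mul_adj :: "nat \<Rightarrow> (nat \<Rightarrow> nat \<Rightarrow> complex) \<Rightarrow> (nat \<Rightarrow> nat \<Rightarrow> complex) \<Rightarrow> nat \<Rightarrow> nat \<Rightarrow> complex" where
  "mul_adj s X Y a b = (\<Sum>c<s. X a c * cnj (Y b c))"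

definition Brac :: "nat \<Rightarrow> nat \<Rightarrow> (nat \<Rightarrow> real) \<Rightarrow> (nat \<Rightarrow> real) \<Rightarrow> bool" where
  "Brac d s \<alpha> \<beta> \<longleftrightarrow> prob_vec d \<alpha> \<and> prob_vec d \<beta> \<and>
     (\<exists>A B :: nat \<Rightarrow> nat \<Rightarrow> nat \<Rightarrow> complex.
        (\<forall>a<s. \<forall>b<s. (\<Sum>i<d. mul_adj s (A i) (A i) a b) = (if a = b then 1 else 0)) \<and>
        (\<forall>a<s. \<forall>b<s. (\<Sum>i<d. mul_adj s (B i) (B i) a b) = (if a = b then 1 else 0)) \<and>
        (\<forall>a<s. \<forall>b<s. (\<Sum>i<d. mul_adj s (A i) (B i) a b) = 0) \<and>
        (\<forall>i<d. frob2 s (A i) / real s = \<alpha> i \<and> frob2 s (B i) / real s = \<beta> i))"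

definition Lset :: "nat \<Rightarrow> nat \<Rightarrow> (nat \<Rightarrow> nat \<Rightarrow> real) set" where
  "Lset d s = {B. bistochastic d B \<and>
     (\<forall>i<d. \<forall>j<d. i \<noteq> j \<longrightarrow> Brac d s (\<lambda>k. B i k) (\<lambda>k. B j k)) \<and>
     (\<forall>i<d. \<forall>j<d. i \<noteq> j \<longrightarrow> Brac d s (\<lambda>k. B k i) (\<lambda>k. B k j))}"

definition perm_mat :: "(nat \<Rightarrow> nat) \<Rightarrow> nat \<Rightarrow> nat \<Rightarrow> real" where
  "perm_mat \<pi> i j = (if \<pi> i = j then 1 else 0)"

end

theory Submission
  imports Defs "Jordan_Normal_Form.Schur_Decomposition"
begin



definition jtr :: "complex mat \<Rightarrow> complex" where
  "jtr A = (\<Sum>i<dim_row A. A $$ (i,i))"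

lemma jtr_comm:
  assumes "A \<in> carrier_mat n n" "B \<in> carrier_mat n n"
  shows "jtr (A * B) = jtr (B * A)"
proof -
  have "jtr (A * B) = (\<Sum>i<n. \<Sum>k<n. A $$ (i,k) * B $$ (k,i))"
    using assms by (simp add: jtr_def scalar_prod_def atLeast0LessThan)
  also have "\<dots> = (\<Sum>k<n. \<Sum>i<n. B $$ (k,i) * A $$ (i,k))"
    by (subst sum.swap) (simp add: mult.commute)
  also have "\<dots> = jtr (B * A)"
    using assms by (simp add: jtr_def scalar_prod_def atLeast0LessThan)
  finally show ?thesis .
qed

lemma idem_trace_nat:
  fixes P :: "nat \<Rightarrow> nat \<Rightarrow> complex"
  assumes idem: "\<forall>a<s. \<forall>b<s. (\<Sum>c<s. P a c * P c b) = P a b"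
  shows "\<exists>k::nat. (\<Sum>a<s. P a a) = of_nat k"
proof -
  define M where "M = Matrix.mat s s (\<lambda>(a,b). P a b)"
  have Mc: "M \<in> carrier_mat s s" by (simp add: M_def)
  have MM: "M * M = M"
    by (rule eq_matI) (use idem in \<open>auto simp: M_def scalar_prod_def atLeast0LessThan\<close>)
  obtain es where cp: "char_poly M = (\<Prod>e\<leftarrow>es. [:-e,1:])"
    using char_poly_factorized[OF Mc] by auto
  obtain B Pm Qm where sd: "schur_decomposition M es = (B,Pm,Qm)"
    by (cases "schur_decomposition M es") auto
  from schur_decomposition[OF Mc cp sd]
  have sim: "similar_mat_wit M B Pm Qm" and ut: "upper_triangular B" by auto
  from sim Mc have Bc: "B \<in> carrier_mat s s" and Pc: "Pm \<in> carrier_mat s s" and Qc: "Qm \<in> carrier_mat s s"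
    and PQ: "Pm * Qm = 1\<^sub>m s" and QP: "Qm * Pm = 1\<^sub>m s" and MB: "M = Pm * B * Qm"
    unfolding similar_mat_wit_def Let_def by auto
  have QM: "Qm * M = B * Qm"
  proof -
    have "Qm * M = Qm * (Pm * (B * Qm))" using MB Pc Bc Qc by (simp add: assoc_mult_mat[of Pm s s B s Qm s])
    also have "\<dots> = (Qm * Pm) * (B * Qm)" using Pc Bc Qc by (simp add: assoc_mult_mat[of Qm s s Pm s "B * Qm" s])
    also have "\<dots> = B * Qm" using QP Bc Qc by simp
    finally show ?thesis .
  qed
  have BBQ: "B * B * Qm = B * Qm"
  proof -
    have "B * B * Qm = B * (B * Qm)" using Bc Qc by (simp add: assoc_mult_mat[of B s s B s Qm s])
    also have "\<dots> = B * (Qm * M)" using QM by simp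
    also have "\<dots> = (B * Qm) * M" using Bc Qc Mc by (simp add: assoc_mult_mat[of B s s Qm s M s])
    also have "\<dots> = Qm * M * M" using QM by simp
    also have "\<dots> = Qm * (M * M)" using Mc Qc by (simp add: assoc_mult_mat[of Qm s s M s M s])
    also have "\<dots> = B * Qm" using MM QM by simp
    finally show ?thesis .
  qed
  have BB: "B * B = B"
  proof -
    have "B * B = B * B * (Qm * Pm)" using QP Bc by simp
    also have "\<dots> = (B * B * Qm) * Pm" using Bc Qc Pc by (intro assoc_mult_mat[symmetric]) auto
    also have "\<dots> = (B * Qm) * Pm" using BBQ by simp
    also have "\<dots> = B * (Qm * Pm)" using Bc Qc Pc by (intro assoc_mult_mat) auto
    also have "\<dots> = B" using QP Bc by simp
    finally show ?thesis .
  qed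
  have trM: "jtr M = jtr B"
  proof -
    have "jtr M = jtr ((Pm * B) * Qm)" using MB by simp
    also have "\<dots> = jtr (Qm * (Pm * B))" using Pc Bc Qc by (intro jtr_comm[of _ s]) auto
    also have "\<dots> = jtr ((Qm * Pm) * B)" using Pc Bc Qc by (simp add: assoc_mult_mat[of Qm s s Pm s B s])
    also have "\<dots> = jtr B" using QP Bc by simp
    finally show ?thesis .
  qed
  have diag: "B $$ (i,i) = 0 \<or> B $$ (i,i) = 1" if i: "i < s" for i
  proof -
    have "(B * B) $$ (i,i) = (\<Sum>k<s. B $$ (i,k) * B $$ (k,i))"
      using Bc i by (simp add: scalar_prod_def atLeast0LessThan)
    also have "\<dots> = (\<Sum>k<s. if k = i then B $$ (i,i) * B $$ (i,i) else 0)"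
    proof (rule sum.cong[OF refl])
      fix k assume k: "k \<in> {..<s}"
      show "B $$ (i,k) * B $$ (k,i) = (if k = i then B $$ (i,i) * B $$ (i,i) else 0)"
      proof (cases "k < i")
        case True then show ?thesis using ut Bc i unfolding upper_triangular_def by auto
      next
        case False
        then show ?thesis using ut Bc k unfolding upper_triangular_def
          by (cases "k = i") auto
      qed
    qed
    also have "\<dots> = B $$ (i,i) * B $$ (i,i)" using i by simp
    finally have "B $$ (i,i) * B $$ (i,i) = B $$ (i,i)" using BB by simp
    then show ?thesis by (metis mult_cancel_left2 mult_cancel_right1 mult_eq_0_iff)
  qed
  have "jtr B = (\<Sum>i<s. if B $$ (i,i) = 1 then 1 else 0)"
    unfolding jtr_def using Bc diag by (intro sum.cong) auto
  also have "\<dots> = of_nat (card {i\<in>{..<s}. B $$ (i,i) = 1})"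
    by (simp add: sum.If_cases Int_def conj_commute)
  finally have "jtr M = of_nat (card {i\<in>{..<s}. B $$ (i,i) = 1})" using trM by simp
  moreover have "jtr M = (\<Sum>a<s. P a a)" by (simp add: jtr_def M_def)
  ultimately show ?thesis by metis
qed




definition mm :: "nat \<Rightarrow> (nat \<Rightarrow> nat \<Rightarrow> complex) \<Rightarrow> (nat \<Rightarrow> nat \<Rightarrow> complex) \<Rightarrow> nat \<Rightarrow> nat \<Rightarrow> complex" where
  "mm s X Y = (\<lambda>a b. \<Sum>c<s. X a c * Y c b)"

definition adj :: "(nat \<Rightarrow> nat \<Rightarrow> complex) \<Rightarrow> nat \<Rightarrow> nat \<Rightarrow> complex" where
  "adj X = (\<lambda>a b. cnj (X b a))"

definition ftr :: "nat \<Rightarrow> (nat \<Rightarrow> nat \<Rightarrow> complex) \<Rightarrow> complex" where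
  "ftr s X = (\<Sum>a<s. X a a)"

lemma mm_assoc: "mm s (mm s X Y) Z = mm s X (mm s Y Z)"
proof (intro ext)
  fix a b
  have "mm s (mm s X Y) Z a b = (\<Sum>c<s. \<Sum>e<s. X a e * Y e c * Z c b)"
    by (simp add: mm_def sum_distrib_right)
  also have "\<dots> = (\<Sum>e<s. \<Sum>c<s. X a e * (Y e c * Z c b))"
    by (subst sum.swap) (simp add: mult.assoc)
  also have "\<dots> = mm s X (mm s Y Z) a b"
    by (simp add: mm_def sum_distrib_left)
  finally show "mm s (mm s X Y) Z a b = mm s X (mm s Y Z) a b" .
qed

lemma ftr_comm: "ftr s (mm s X Y) = ftr s (mm s Y X)"
  unfolding ftr_def mm_def by (subst sum.swap) (simp add: mult.commute)

lemma adj_adj[simp]: "adj (adj X) = X"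
  by (simp add: adj_def)

lemma adj_mm: "adj (mm s X Y) = mm s (adj Y) (adj X)"
  by (simp add: adj_def mm_def mult.commute)

lemma frob2_nonneg: "0 \<le> frob2 s X"
  by (simp add: frob2_def sum_nonneg)

lemma ftr_frob: "ftr s (mm s X (adj X)) = of_real (frob2 s X)"
  unfolding ftr_def mm_def adj_def frob2_def
  by (simp add: complex_norm_square del: of_real_power)

lemma ftr_frob': "ftr s (mm s (adj X) X) = of_real (frob2 s X)"
  using ftr_comm ftr_frob by metis

lemma mul_adj_mm: "mul_adj s X Y = mm s X (adj Y)"
  by (intro ext) (simp add: mul_adj_def mm_def adj_def)

lemma frob2_zero:
  assumes "frob2 s X = 0" "a < s" "b < s"
  shows "X a b = 0"
proof -
  have h: "(\<Sum>a<s. \<Sum>b<s. (cmod (X a b))\<^sup>2) = 0" using assms(1) by (simp add: frob2_def)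
  have "(\<Sum>b<s. (cmod (X a b))\<^sup>2) = 0"
    using h assms(2) by (subst (asm) sum_nonneg_eq_0_iff) (auto intro: sum_nonneg)
  then have "(cmod (X a b))\<^sup>2 = 0"
    using assms(3) by (subst (asm) sum_nonneg_eq_0_iff) auto
  then show ?thesis by simp
qed

definition Idm :: "nat \<Rightarrow> nat \<Rightarrow> complex" where
  "Idm = (\<lambda>a b. if a = b then 1 else 0)"

lemma mm_diff_left: "mm s (X - Y) Z = mm s X Z - mm s Y Z"
  by (simp add: mm_def fun_diff_def algebra_simps sum_subtractf)

lemma mm_diff_right: "mm s Z (X - Y) = mm s Z X - mm s Z Y"
  by (simp add: mm_def fun_diff_def algebra_simps sum_subtractf)

lemma ftr_diff: "ftr s (X - Y) = ftr s X - ftr s Y"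
  by (simp add: ftr_def sum_subtractf)

lemma ftr_Id_left: "ftr s (mm s Idm X) = ftr s X"
  unfolding ftr_def mm_def Idm_def
proof (rule sum.cong[OF refl])
  fix a assume a: "a \<in> {..<s}"
  have "(\<Sum>c<s. (if a = c then 1 else 0) * X c a) = (\<Sum>c<s. if a = c then X a a else 0)"
    by (intro sum.cong) auto
  then show "(\<Sum>c<s. (if a = c then 1 else 0) * X c a) = X a a" using a by simp
qed

lemma ftr_Id_right: "ftr s (mm s X Idm) = ftr s X"
  by (simp add: ftr_def mm_def Idm_def if_distrib cong: if_cong)

lemma ftr_Id: "ftr s (mm s Idm Idm) = of_nat s"
  by (simp add: ftr_Id_left) (simp add: ftr_def Idm_def)

lemma half:
  fixes A :: "nat \<Rightarrow> nat \<Rightarrow> nat \<Rightarrow> complex"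
  assumes hA: "\<forall>a<s. \<forall>b<s. (\<Sum>i<d. mul_adj s (A i) (A i) a b) = (if a = b then 1 else 0)"
    and bd: "\<beta> < d"
  shows "Re (ftr s (mm s (mm s (adj (A \<beta>)) (A \<beta>)) (mm s (adj (A \<beta>)) (A \<beta>)))) \<le> frob2 s (A \<beta>)"
proof -
  define X where "X = A \<beta>"
  define G where "G = mm s X (adj X)"
  define GA where "GA i = mm s (A i) (adj (A i))" for i
  have e1: "ftr s (mm s (mm s (adj X) X) (mm s (adj X) X)) = ftr s (mm s G G)"
  proof -
    have "ftr s (mm s (mm s (adj X) X) (mm s (adj X) X)) = ftr s (mm s (adj X) (mm s G X))"
      by (simp add: mm_assoc G_def)
    also have "\<dots> = ftr s (mm s (mm s G X) (adj X))" by (rule ftr_comm)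
    also have "\<dots> = ftr s (mm s G G)" by (simp add: mm_assoc G_def)
    finally show ?thesis .
  qed
  have e2: "ftr s G = (\<Sum>i<d. ftr s (mm s G (GA i)))"
  proof -
    have "ftr s G = (\<Sum>a<s. \<Sum>c<s. G a c * (\<Sum>i<d. GA i c a))"
      unfolding ftr_def
    proof (rule sum.cong[OF refl])
      fix a assume a: "a \<in> {..<s}"
      have "(\<Sum>c<s. G a c * (\<Sum>i<d. GA i c a)) = (\<Sum>c<s. G a c * (if c = a then 1 else 0))"
        using hA a by (intro sum.cong) (auto simp: GA_def mul_adj_mm)
      also have "\<dots> = G a a" using a by (simp add: if_distrib cong: if_cong)
      finally show "G a a = (\<Sum>c<s. G a c * (\<Sum>i<d. GA i c a))" by simp
    qed
    also have "\<dots> = (\<Sum>i<d. ftr s (mm s G (GA i)))"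
      unfolding ftr_def mm_def sum_distrib_left
      by (subst sum.swap, subst (2) sum.swap) (rule refl)
    finally show ?thesis .
  qed
  have e3: "ftr s (mm s G (GA i)) = of_real (frob2 s (mm s (adj (A i)) X))" for i
  proof -
    have "ftr s (mm s G (GA i)) = ftr s (mm s (GA i) G)" by (rule ftr_comm)
    also have "\<dots> = ftr s (mm s (A i) (mm s (adj (A i)) G))" by (simp add: GA_def mm_assoc)
    also have "\<dots> = ftr s (mm s (mm s (adj (A i)) G) (A i))" by (rule ftr_comm)
    also have "\<dots> = ftr s (mm s (mm s (adj (A i)) X) (adj (mm s (adj (A i)) X)))"
      by (simp add: G_def mm_assoc adj_mm)
    also have "\<dots> = of_real (frob2 s (mm s (adj (A i)) X))" by (rule ftr_frob)
    finally show ?thesis .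
  qed
  have "ftr s G = ftr s (mm s G G) + (\<Sum>i\<in>{..<d}-{\<beta>}. ftr s (mm s G (GA i)))"
    using e2 bd by (simp add: sum.remove GA_def G_def X_def)
  also have "(\<Sum>i\<in>{..<d}-{\<beta>}. ftr s (mm s G (GA i))) = of_real (\<Sum>i\<in>{..<d}-{\<beta>}. frob2 s (mm s (adj (A i)) X))"
    by (simp add: e3)
  finally have "Re (ftr s G) = Re (ftr s (mm s G G)) + (\<Sum>i\<in>{..<d}-{\<beta>}. frob2 s (mm s (adj (A i)) X))"
    by simp
  moreover have "0 \<le> (\<Sum>i\<in>{..<d}-{\<beta>}. frob2 s (mm s (adj (A i)) X))"
    by (intro sum_nonneg frob2_nonneg)
  moreover have "ftr s G = of_real (frob2 s X)" by (simp add: G_def ftr_frob)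
  ultimately show ?thesis using e1 by (simp add: X_def)
qed




lemma core:
  fixes A B :: "nat \<Rightarrow> nat \<Rightarrow> nat \<Rightarrow> complex"
  assumes hA: "\<forall>a<s. \<forall>b<s. (\<Sum>i<d. mul_adj s (A i) (A i) a b) = (if a = b then 1 else 0)"
    and hB: "\<forall>a<s. \<forall>b<s. (\<Sum>i<d. mul_adj s (B i) (B i) a b) = (if a = b then 1 else 0)"
    and bd: "\<beta> < d"
    and hXY: "\<forall>a<s. \<forall>b<s. mul_adj s (A \<beta>) (B \<beta>) a b = 0"
    and hsum: "frob2 s (A \<beta>) + frob2 s (B \<beta>) = real s"
  shows "\<exists>k::nat. frob2 s (A \<beta>) = real k"
proof -
  define X where "X = A \<beta>"
  define Y where "Y = B \<beta>"
  define P where "P = mm s (adj X) X"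
  define Q where "Q = mm s (adj Y) Y"
  have hP: "Re (ftr s (mm s P P)) \<le> frob2 s X"
    using half[OF hA bd] by (simp add: P_def X_def)
  have hQ: "Re (ftr s (mm s Q Q)) \<le> frob2 s Y"
    using half[OF hB bd] by (simp add: Q_def Y_def)
  have trP: "ftr s P = of_real (frob2 s X)" by (simp add: P_def ftr_frob')
  have trQ: "ftr s Q = of_real (frob2 s Y)" by (simp add: Q_def ftr_frob')
  have PQ: "mm s P Q = (\<lambda>a b. 0)"
  proof -
    have W0: "mm s (mm s X (adj Y)) Y c b = 0" if "c < s" for c b
      using hXY that unfolding X_def Y_def by (simp add: mm_def mul_adj_mm)
    have "mm s P Q = mm s (adj X) (mm s (mm s X (adj Y)) Y)"
      by (simp add: P_def Q_def mm_assoc)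
    also have "\<dots> = (\<lambda>a b. 0)"
      unfolding mm_def[of s "adj X" "mm s (mm s X (adj Y)) Y"] by (simp add: W0)
    finally show ?thesis .
  qed
  have QP: "ftr s (mm s Q P) = 0"
    using PQ ftr_comm[of s Q P] by (simp add: ftr_def)
  have adjP: "adj P = P" by (simp add: P_def adj_mm)
  have adjQ: "adj Q = Q" by (simp add: Q_def adj_mm)
  define E where "E = Idm - P - Q"
  have adjE: "adj E = E"
  proof (intro ext)
    fix a b
    have "cnj (P b a) = P a b" using fun_cong[OF fun_cong[OF adjP, of a], of b] by (simp add: adj_def)
    moreover have "cnj (Q b a) = Q a b" using fun_cong[OF fun_cong[OF adjQ, of a], of b] by (simp add: adj_def)
    ultimately show "adj E a b = E a b" by (simp add: adj_def E_def Idm_def)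
  qed
  have trE: "ftr s (mm s E E) = of_nat s - 2 * ftr s P - 2 * ftr s Q + ftr s (mm s P P) + ftr s (mm s Q Q)
      + ftr s (mm s P Q) + ftr s (mm s Q P)"
    unfolding E_def
    by (simp add: mm_diff_left mm_diff_right ftr_diff ftr_Id_left ftr_Id_right ftr_Id)
      (simp add: ftr_def Idm_def)
  have "of_real (frob2 s E) = ftr s (mm s E E)"
    using ftr_frob[of s E] adjE by simp
  then have "frob2 s E = Re (ftr s (mm s E E))" by (metis Re_complex_of_real)
  also have "\<dots> = real s - 2 * frob2 s X - 2 * frob2 s Y + Re (ftr s (mm s P P)) + Re (ftr s (mm s Q Q))"
    using trE trP trQ QP PQ by (simp add: ftr_def)
  also have "\<dots> \<le> 0" using hP hQ hsum X_def Y_def by simp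
  finally have "frob2 s E = 0" using frob2_nonneg[of s E] by linarith
  then have E0: "E a b = 0" if "a < s" "b < s" for a b using frob2_zero that by blast
  have idem: "\<forall>a<s. \<forall>b<s. (\<Sum>c<s. P a c * P c b) = P a b"
  proof (intro allI impI)
    fix a b assume a: "a < s" and b: "b < s"
    have "(\<Sum>c<s. P a c * P c b) = (\<Sum>c<s. P a c * (Idm c b - Q c b))"
      using E0 b by (intro sum.cong) (auto simp: E_def algebra_simps)
    also have "\<dots> = (\<Sum>c<s. P a c * Idm c b) - mm s P Q a b"
      by (simp add: mm_def algebra_simps sum_subtractf)
    also have "\<dots> = P a b"
    proof -
      have "(\<Sum>c<s. P a c * Idm c b) = (\<Sum>c<s. if c = b then P a b else 0)"
        by (intro sum.cong) (auto simp: Idm_def)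
      then show ?thesis using b PQ by simp
    qed
    finally show "(\<Sum>c<s. P a c * P c b) = P a b" .
  qed
  obtain k :: nat where "(\<Sum>a<s. P a a) = of_nat k" using idem_trace_nat[OF idem] by blast
  then have "of_real (frob2 s X) = (of_nat k :: complex)" using trP by (simp add: ftr_def)
  then have "frob2 s X = real k" by (metis of_real_eq_iff of_real_of_nat_eq)
  then show ?thesis by (auto simp: X_def)
qed




lemma sum_blocks:
  fixes g :: "nat \<Rightarrow> 'a::comm_monoid_add"
  shows "(\<Sum>k<d. \<Sum>c<s. g (k * s + c)) = (\<Sum>r<d * s. g r)"
proof (induction d)
  case 0 then show ?case by simp
next
  case (Suc d)
  have "(\<Sum>r<Suc d * s. g r) = (\<Sum>r<d * s + s. g r)" by (simp add: add.commute)
  also have "\<dots> = (\<Sum>r<d * s. g r) + (\<Sum>r=d * s..<d * s+s. g r)"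
    using sum.atLeastLessThan_concat[of 0 "d * s" "d * s + s" g] by (simp add: atLeast0LessThan)
  also have "(\<Sum>r=d * s..<d * s+s. g r) = (\<Sum>c<s. g (d * s + c))"
  proof -
    have "(\<Sum>r=d * s..<d * s+s. g r) = (\<Sum>c=0..<s. g (c + d * s))"
      using sum.shift_bounds_nat_ivl[of g 0 "d * s" s] by (simp add: add.commute)
    then show ?thesis by (simp add: atLeast0LessThan add.commute)
  qed
  finally show ?case using Suc by simp
qed

lemma idx_lt: "i < d \<Longrightarrow> a < (s::nat) \<Longrightarrow> i * s + a < d * s"
proof -
  assume "i < d" "a < s"
  then have "i * s + a < i * s + s" by simp
  also have "\<dots> = Suc i * s" by simp
  also have "\<dots> \<le> d * s" using \<open>i < d\<close> by (intro mult_le_mono1) simp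
  finally show ?thesis .
qed

lemma blk_eq: "a < (s::nat) \<Longrightarrow> b < s \<Longrightarrow> (i * s + a = j * s + b) \<longleftrightarrow> (i = j \<and> a = b)"
proof
  assume a: "a < s" and b: "b < s" and e: "i * s + a = j * s + b"
  have "(i * s + a) div s = i" "(i * s+a) mod s = a" using a by auto
  moreover have "(j * s + b) div s = j" "(j * s+b) mod s = b" using b by auto
  ultimately show "i = j \<and> a = b" using e by metis
qed auto

lemma unit_row:
  assumes U: "unitary_mat n U" and r: "r < n" "r' < n"
  shows "(\<Sum>k<n. U r k * cnj (U r' k)) = (if r = r' then 1 else 0)"
  using U r unfolding unitary_mat_def by blast

lemma unit_col:
  assumes U: "unitary_mat n U" and r: "r < n" "r' < n"
  shows "(\<Sum>k<n. cnj (U k r) * U k r') = (if r = r' then 1 else 0)"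
  using U r unfolding unitary_mat_def by blast

lemma rowsum:
  assumes U: "unitary_mat (d * s) U" and i: "i < d" "j < d" and a: "a < s" "b < s"
  shows "(\<Sum>k<d. mul_adj s (block s U i k) (block s U j k) a b) = (if i = j \<and> a = b then 1 else 0)"
proof -
  have "(\<Sum>k<d. mul_adj s (block s U i k) (block s U j k) a b)
      = (\<Sum>k<d. \<Sum>c<s. (\<lambda>r. U (i * s+a) r * cnj (U (j * s+b) r)) (k * s + c))"
    by (simp add: mul_adj_def block_def)
  also have "\<dots> = (\<Sum>r<d * s. U (i * s+a) r * cnj (U (j * s+b) r))" by (rule sum_blocks)
  also have "\<dots> = (if i * s+a = j * s+b then 1 else 0)"
    using unit_row[OF U idx_lt[OF i(1) a(1)] idx_lt[OF i(2) a(2)]] .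
  finally show ?thesis using blk_eq[OF a] by simp
qed

lemma colsum:
  assumes U: "unitary_mat (d * s) U" and i: "i < d" "j < d" and a: "a < s" "b < s"
  shows "(\<Sum>k<d. mul_adj s (adj (block s U k i)) (adj (block s U k j)) a b) = (if i = j \<and> a = b then 1 else 0)"
proof -
  have "(\<Sum>k<d. mul_adj s (adj (block s U k i)) (adj (block s U k j)) a b)
      = (\<Sum>k<d. \<Sum>c<s. (\<lambda>r. cnj (U r (i * s+a)) * U r (j * s+b)) (k * s + c))"
    by (simp add: mul_adj_def block_def adj_def)
  also have "\<dots> = (\<Sum>r<d * s. cnj (U r (i * s+a)) * U r (j * s+b))" by (rule sum_blocks)
  also have "\<dots> = (if i * s+a = j * s+b then 1 else 0)"
    using unit_col[OF U idx_lt[OF i(1) a(1)] idx_lt[OF i(2) a(2)]] .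
  finally show ?thesis using blk_eq[OF a] by simp
qed

lemma frob2_adj: "frob2 s (adj X) = frob2 s X"
  unfolding frob2_def adj_def by (subst sum.swap) simp

lemma row_norm:
  assumes U: "unitary_mat n U" and r: "r < n"
  shows "(\<Sum>k<n. (cmod (U r k))\<^sup>2) = 1"
proof -
  have "(\<Sum>k<n. U r k * cnj (U r k)) = 1" using unit_row[OF U r r] by simp
  then have "of_real (\<Sum>k<n. (cmod (U r k))\<^sup>2) = (1::complex)"
    by (simp add: complex_norm_square del: of_real_power)
  then show ?thesis by (metis of_real_eq_1_iff)
qed

lemma col_norm:
  assumes U: "unitary_mat n U" and r: "r < n"
  shows "(\<Sum>k<n. (cmod (U k r))\<^sup>2) = 1"
proof -
  have "(\<Sum>k<n. cnj (U k r) * U k r) = 1" using unit_col[OF U r r] by simp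
  then have "of_real (\<Sum>k<n. (cmod (U k r))\<^sup>2) = (1::complex)"
    by (simp add: complex_norm_square mult.commute del: of_real_power)
  then show ?thesis by (metis of_real_eq_1_iff)
qed

lemma Uset_sub_Lset:
  assumes s: "s \<ge> 1" and B: "B \<in> Uset d s"
  shows "B \<in> Lset d s"
proof -
  obtain U where U: "unitary_mat (d * s) U" and BU: "\<forall>i<d. \<forall>j<d. B i j = phi d s U i j"
    using B unfolding Uset_def by blast
  have Bij: "B i j = frob2 s (block s U i j) / real s" if "i < d" "j < d" for i j
    using BU that by (simp add: phi_def)
  have nonneg: "\<forall>i<d. \<forall>j<d. 0 \<le> B i j" using Bij frob2_nonneg by simp
  have rows: "(\<Sum>j<d. B i j) = 1" if i: "i < d" for i
  proof -
    have "(\<Sum>j<d. frob2 s (block s U i j)) = (\<Sum>a<s. \<Sum>j<d. \<Sum>b<s. (cmod (U (i * s+a) (j * s+b)))\<^sup>2)"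
      unfolding frob2_def block_def by (subst sum.swap) simp
    also have "\<dots> = (\<Sum>a<s. \<Sum>r<d * s. (cmod (U (i * s+a) r))\<^sup>2)"
      by (intro sum.cong refl sum_blocks)
    also have "\<dots> = (\<Sum>a<s. 1)" using row_norm[OF U] idx_lt[OF i] by (intro sum.cong) auto
    finally have "(\<Sum>j<d. frob2 s (block s U i j)) = real s" by simp
    then show ?thesis using Bij i s by (simp add: sum_divide_distrib[symmetric])
  qed
  have cols: "(\<Sum>i<d. B i j) = 1" if j: "j < d" for j
  proof -
    have "(\<Sum>i<d. frob2 s (block s U i j)) = (\<Sum>b<s. \<Sum>i<d. \<Sum>a<s. (cmod (U (i * s+a) (j * s+b)))\<^sup>2)"
      unfolding frob2_def block_def by (subst sum.swap, subst (2) sum.swap) simp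
    also have "\<dots> = (\<Sum>b<s. \<Sum>r<d * s. (cmod (U r (j * s+b)))\<^sup>2)"
    proof (rule sum.cong[OF refl])
      fix b show "(\<Sum>i<d. \<Sum>a<s. (cmod (U (i * s+a) (j * s+b)))\<^sup>2) = (\<Sum>r<d * s. (cmod (U r (j * s+b)))\<^sup>2)"
        using sum_blocks[of "\<lambda>r. (cmod (U r (j * s+b)))\<^sup>2" s d] by simp
    qed
    also have "\<dots> = (\<Sum>b<s. 1)" using col_norm[OF U] idx_lt[OF j] by (intro sum.cong) auto
    finally have "(\<Sum>i<d. frob2 s (block s U i j)) = real s" by simp
    then show ?thesis using Bij j s by (simp add: sum_divide_distrib[symmetric])
  qed
  have bist: "bistochastic d B" unfolding bistochastic_def using nonneg rows cols by blast
  have pr: "prob_vec d (\<lambda>k. B i k)" if "i < d" for i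
    using nonneg rows that unfolding prob_vec_def by auto
  have pc: "prob_vec d (\<lambda>k. B k i)" if "i < d" for i
    using nonneg cols that unfolding prob_vec_def by auto
  have brow: "Brac d s (\<lambda>k. B i k) (\<lambda>k. B j k)" if ij: "i < d" "j < d" "i \<noteq> j" for i j
    unfolding Brac_def
    apply (intro conjI[OF pr[OF ij(1)]] conjI[OF pr[OF ij(2)]])
    apply (rule exI[of _ "\<lambda>k. block s U i k"], rule exI[of _ "\<lambda>k. block s U j k"])
    using rowsum[OF U] ij Bij by auto
  have bcol: "Brac d s (\<lambda>k. B k i) (\<lambda>k. B k j)" if ij: "i < d" "j < d" "i \<noteq> j" for i j
    unfolding Brac_def
    apply (intro conjI[OF pc[OF ij(1)]] conjI[OF pc[OF ij(2)]])
    apply (rule exI[of _ "\<lambda>k. adj (block s U k i)"], rule exI[of _ "\<lambda>k. adj (block s U k j)"])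
    using colsum[OF U] ij Bij by (auto simp: frob2_adj)
  show ?thesis unfolding Lset_def using bist brow bcol by blast
qed




lemma sum_split_if:
  assumes "k \<le> s"
  shows "(\<Sum>a<s. if a < s - k then x else y) = real (s - k) * x + real k * (y::real)"
proof -
  have "(\<Sum>a<s. if a < s - k then x else y) = (\<Sum>a\<in>{..<s} \<inter> {a. a < s - k}. x) + (\<Sum>a\<in>{..<s} \<inter> - {a. a < s - k}. y)"
    by (rule sum.If_cases) simp
  moreover have "{..<s} \<inter> {a. a < s - k} = {..<s - k}" by auto
  moreover have "{..<s} \<inter> - {a. a < s - k} = {s - k..<s}" by auto
  ultimately show ?thesis using assms by simp
qed

lemma k_in_Uset:
  assumes pi: "\<pi> permutes {..<d}" and si: "\<sigma> permutes {..<d}" and s: "s \<ge> 1" and k: "k \<le> s"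
  shows "(\<lambda>i j. (1 - real k / real s) * perm_mat \<pi> i j + (real k / real s) * perm_mat \<sigma> i j) \<in> Uset d s"
proof -
  define g where "g i a = (if a < s - k then \<pi> i else \<sigma> i)" for i a
  define f where "f r = g (r div s) (r mod s) * s + r mod s" for r
  define U where "U r c = (if f r = c then 1 else 0 :: complex)" for r c
  have gd: "g i a < d" if "i < d" for i a
    using that permutes_in_image[OF pi] permutes_in_image[OF si] by (simp add: g_def)
  have f_lt: "f r < d * s" if "r < d * s" for r
  proof -
    have "r div s < d" using that by (simp add: less_mult_imp_div_less)
    moreover have "r mod s < s" using s by simp
    ultimately show ?thesis unfolding f_def by (intro idx_lt gd)
  qed
  have f_inj: "inj_on f {..<d * s}"
  proof (rule inj_onI)
    fix r r' assume "r \<in> {..<d * s}" "r' \<in> {..<d * s}" and e: "f r = f r'"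
    have m: "r mod s < s" "r' mod s < s" using s by auto
    from e[unfolded f_def] blk_eq[OF m]
    have e1: "g (r div s) (r mod s) = g (r' div s) (r' mod s)" and e2: "r mod s = r' mod s" by auto
    have "r div s = r' div s"
    proof (cases "r mod s < s - k")
      case True
      then have "\<pi> (r div s) = \<pi> (r' div s)" using e1 e2 by (simp add: g_def)
      then show ?thesis using permutes_inj[OF pi] by (meson injD)
    next
      case False
      then have "\<sigma> (r div s) = \<sigma> (r' div s)" using e1 e2 by (simp add: g_def)
      then show ?thesis using permutes_inj[OF si] by (meson injD)
    qed
    then show "r = r'" using e2 by (metis div_mult_mod_eq)
  qed
  have f_surj: "f ` {..<d * s} = {..<d * s}"
    using f_inj f_lt by (intro endo_inj_surj) auto
  have unit: "unitary_mat (d * s) U"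
    unfolding unitary_mat_def
  proof (intro conjI allI impI)
    fix i j assume i: "i < d * s" and j: "j < d * s"
    have "(\<Sum>k<d * s. U i k * cnj (U j k)) = (\<Sum>k<d * s. if k = f i then (if f j = f i then 1 else 0) else 0)"
      by (intro sum.cong) (auto simp: U_def)
    also have "\<dots> = (if f j = f i then 1 else 0)" using f_lt[OF i] by simp
    also have "\<dots> = (if i = j then 1 else 0)" using f_inj i j by (auto dest: inj_onD)
    finally show "(\<Sum>k<d * s. U i k * cnj (U j k)) = (if i = j then 1 else 0)" .
  next
    fix i j assume i: "i < d * s" and j: "j < d * s"
    obtain k0 where k0: "k0 < d * s" "f k0 = i" using f_surj i by (metis imageE lessThan_iff)
    have "(\<Sum>k<d * s. cnj (U k i) * U k j) = (\<Sum>k<d * s. if k = k0 then (if i = j then 1 else 0) else 0)"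
    proof (rule sum.cong[OF refl])
      fix k assume k: "k \<in> {..<d * s}"
      have "f k = i \<longleftrightarrow> k = k0" using f_inj k k0 by (auto dest: inj_onD)
      then show "cnj (U k i) * U k j = (if k = k0 then (if i = j then 1 else 0) else 0)"
        by (auto simp: U_def)
    qed
    also have "\<dots> = (if i = j then 1 else 0)" using k0 by simp
    finally show "(\<Sum>k<d * s. cnj (U k i) * U k j) = (if i = j then 1 else 0)" .
  qed
  have ph: "phi d s U i j = (1 - real k / real s) * perm_mat \<pi> i j + (real k / real s) * perm_mat \<sigma> i j"
    if i: "i < d" and j: "j < d" for i j
  proof -
    have fi: "f (i * s + a) = g i a * s + a" if "a < s" for a
      using that by (simp add: f_def)
    have blk: "block s U i j a b = (if g i a = j \<and> a = b then 1 else 0)" if "a < s" "b < s" for a b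
      using blk_eq[OF that, of "g i a" j] fi[OF that(1)] by (simp add: block_def U_def)
    have "frob2 s (block s U i j) = (\<Sum>a<s. \<Sum>b<s. if b = a then (if g i a = j then 1 else 0) else 0)"
      unfolding frob2_def by (intro sum.cong refl) (auto simp: blk)
    also have "\<dots> = (\<Sum>a<s. if a < s - k then perm_mat \<pi> i j else perm_mat \<sigma> i j)"
      by (intro sum.cong refl) (simp add: g_def perm_mat_def)
    also have "\<dots> = real (s - k) * perm_mat \<pi> i j + real k * perm_mat \<sigma> i j"
      by (rule sum_split_if[OF k])
    finally have "frob2 s (block s U i j) = real (s - k) * perm_mat \<pi> i j + real k * perm_mat \<sigma> i j" .
    then show ?thesis using s k by (simp add: phi_def of_nat_diff field_simps)
  qed
  show ?thesis unfolding Uset_def using unit ph by auto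
qed




no_notation m_inv (\<open>(\<open>open_block notation=\<open>prefix inv\<close>\<close>inv\<index> _)\<close> [81] 80)

lemma orbit_sub:
  assumes "f x \<in> S" "\<forall>y\<in>S. f y \<in> S"
  shows "orbit f x \<subseteq> S"
proof
  fix z assume "z \<in> orbit f x"
  then show "z \<in> S" by (induct rule: orbit.induct) (use assms in auto)
qed

lemma L_imp_k:
  assumes pi: "\<pi> permutes {..<d}" and si: "\<sigma> permutes {..<d}" and s: "s \<ge> 1"
    and t: "0 \<le> t" "t \<le> 1"
    and cyc: "\<exists>p x. p \<ge> 3 \<and> x < d \<and> card (orbit (inv \<pi> \<circ> \<sigma>) x) = p"
    and M: "(\<lambda>i j. (1 - t) * perm_mat \<pi> i j + t * perm_mat \<sigma> i j) \<in> Lset d s"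
  shows "\<exists>k. k \<le> s \<and> t = real k / real s"
proof -
  define \<tau> where "\<tau> = inv \<pi> \<circ> \<sigma>"
  obtain x where x: "x < d" and cx: "card (orbit \<tau> x) \<ge> 3" using cyc unfolding \<tau>_def by auto
  have t1: "\<tau> x \<noteq> x"
  proof
    assume "\<tau> x = x"
    then have "orbit \<tau> x \<subseteq> {x}" by (intro orbit_sub) auto
    then have "card (orbit \<tau> x) \<le> card {x}" by (intro card_mono) auto
    then show False using cx by simp
  qed
  have t2: "\<tau> (\<tau> x) \<noteq> x"
  proof
    assume "\<tau> (\<tau> x) = x"
    then have "orbit \<tau> x \<subseteq> {\<tau> x, x}" by (intro orbit_sub) auto
    then have "card (orbit \<tau> x) \<le> card {\<tau> x, x}" by (intro card_mono) auto
    also have "\<dots> \<le> 2" by (simp add: card_insert_le_m1)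
    finally show False using cx by simp
  qed
  define y where "y = \<tau> x"
  have piinv: "inv \<pi> permutes {..<d}" using pi by (rule permutes_inv)
  have y: "y < d" using x permutes_in_image[OF si] permutes_in_image[OF piinv] by (simp add: y_def \<tau>_def)
  have piy: "\<pi> y = \<sigma> x" by (simp add: y_def \<tau>_def permutes_inverses(1)[OF pi])
  define aa where "aa = \<pi> x"
  define bb where "bb = \<sigma> x"
  define cc where "cc = \<sigma> y"
  have ab: "aa \<noteq> bb"
  proof
    assume "aa = bb"
    then have "\<tau> x = inv \<pi> (\<pi> x)" by (simp add: aa_def bb_def \<tau>_def)
    then have "\<tau> x = x" using permutes_inverses(2)[OF pi] by simp
    then show False using t1 by simp
  qed
  have bc: "bb \<noteq> cc"
  proof
    assume "bb = cc"
    then have "x = y" using permutes_inj[OF si] by (simp add: bb_def cc_def inj_eq)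
    then show False using t1 y_def by simp
  qed
  have ac: "aa \<noteq> cc"
  proof
    assume "aa = cc"
    then have "\<tau> y = inv \<pi> (\<pi> x)" by (simp add: \<tau>_def cc_def aa_def)
    then have "\<tau> y = x" using permutes_inverses(2)[OF pi] by simp
    then show False using t2 y_def by simp
  qed
  have xy: "x \<noteq> y" using t1 y_def by simp
  have bbd: "bb < d" using x permutes_in_image[OF si] by (simp add: bb_def)
  define \<alpha> where "\<alpha> = (\<lambda>k. (1 - t) * perm_mat \<pi> x k + t * perm_mat \<sigma> x k)"
  define \<beta> where "\<beta> = (\<lambda>k. (1 - t) * perm_mat \<pi> y k + t * perm_mat \<sigma> y k)"
  have al: "\<alpha> k = (1 - t) * (if k = aa then 1 else 0) + t * (if k = bb then 1 else 0)" for k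
    by (auto simp: \<alpha>_def perm_mat_def aa_def bb_def)
  have be: "\<beta> k = (1 - t) * (if k = bb then 1 else 0) + t * (if k = cc then 1 else 0)" for k
    by (auto simp: \<beta>_def perm_mat_def piy cc_def bb_def)
  have "\<forall>i<d. \<forall>j<d. i \<noteq> j \<longrightarrow> Brac d s (\<lambda>k. (1 - t) * perm_mat \<pi> i k + t * perm_mat \<sigma> i k) (\<lambda>k. (1 - t) * perm_mat \<pi> j k + t * perm_mat \<sigma> j k)"
    using M unfolding Lset_def mem_Collect_eq by blast
  then have "Brac d s \<alpha> \<beta>" unfolding \<alpha>_def \<beta>_def using x y xy by blast
  then obtain A B :: "nat \<Rightarrow> nat \<Rightarrow> nat \<Rightarrow> complex" where
    hA: "\<forall>a<s. \<forall>b<s. (\<Sum>i<d. mul_adj s (A i) (A i) a b) = (if a = b then 1 else 0)" and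
    hB: "\<forall>a<s. \<forall>b<s. (\<Sum>i<d. mul_adj s (B i) (B i) a b) = (if a = b then 1 else 0)" and
    hAB: "\<forall>a<s. \<forall>b<s. (\<Sum>i<d. mul_adj s (A i) (B i) a b) = 0" and
    hn: "\<forall>i<d. frob2 s (A i) / real s = \<alpha> i \<and> frob2 s (B i) / real s = \<beta> i"
    unfolding Brac_def by blast
  have sp: "real s > 0" using s by simp
  have zero: "mul_adj s (A i) (B i) a b = 0" if i: "i < d" "i \<noteq> bb" and a: "a < s" "b < s" for i a b
  proof (cases "i = aa")
    case True
    then have "\<beta> i = 0" using ab ac be by simp
    then have "frob2 s (B i) = 0" using hn i sp by auto
    then have "B i b c = 0" if "c < s" for c using frob2_zero that a by blast
    then show ?thesis by (simp add: mul_adj_def)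
  next
    case False
    then have "\<alpha> i = 0" using i al by simp
    then have "frob2 s (A i) = 0" using hn i sp by auto
    then have "A i a c = 0" if "c < s" for c using frob2_zero that a by blast
    then show ?thesis by (simp add: mul_adj_def)
  qed
  have hXY: "\<forall>a<s. \<forall>b<s. mul_adj s (A bb) (B bb) a b = 0"
  proof (intro allI impI)
    fix a b assume a: "a < s" "b < s"
    have "(\<Sum>i<d. mul_adj s (A i) (B i) a b) = mul_adj s (A bb) (B bb) a b + (\<Sum>i\<in>{..<d}-{bb}. mul_adj s (A i) (B i) a b)"
      using bbd by (simp add: sum.remove)
    also have "(\<Sum>i\<in>{..<d}-{bb}. mul_adj s (A i) (B i) a b) = 0"
      using zero a by (intro sum.neutral) auto
    finally show "mul_adj s (A bb) (B bb) a b = 0" using hAB a by simp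
  qed
  have fa: "frob2 s (A bb) = real s * t" using hn bbd al ab sp by (auto simp: field_simps)
  have fb: "frob2 s (B bb) = real s * (1 - t)" using hn bbd be bc sp by (auto simp: field_simps)
  have hsum: "frob2 s (A bb) + frob2 s (B bb) = real s" using fa fb by (simp add: algebra_simps)
  obtain k :: nat where k: "frob2 s (A bb) = real k" using core[OF hA hB bbd hXY hsum] by blast
  have tk: "t = real k / real s" using k fa sp by (simp add: field_simps)
  have "real k = t * real s" using tk sp by simp
  also have "\<dots> \<le> 1 * real s" using t sp by (intro mult_right_mono) auto
  finally have "real k \<le> real s" by simp
  then show ?thesis using tk by auto
qed

theorem proposition3p13:
  fixes d s :: nat and \<pi> \<sigma> :: "nat \<Rightarrow> nat"
  assumes "d \<ge> 3" and "s \<ge> 1"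
    and "\<pi> permutes {..<d}" and "\<sigma> permutes {..<d}"
    and "\<exists>p x. p \<ge> 3 \<and> x < d \<and> card (orbit (inv \<pi> \<circ> \<sigma>) x) = p"
  shows "{t\<in>{0..1::real}. (\<lambda>i j. (1 - t) * perm_mat \<pi> i j + t * perm_mat \<sigma> i j) \<in> Uset d s}
           = {t\<in>{0..1::real}. (\<lambda>i j. (1 - t) * perm_mat \<pi> i j + t * perm_mat \<sigma> i j) \<in> Lset d s}
       \<and> {t\<in>{0..1::real}. (\<lambda>i j. (1 - t) * perm_mat \<pi> i j + t * perm_mat \<sigma> i j) \<in> Lset d s}
           = {real k / real s | k. k \<le> s}"
proof -
  let ?M = "\<lambda>t::real. (\<lambda>i j. (1 - t) * perm_mat \<pi> i j + t * perm_mat \<sigma> i j)"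
  let ?SU = "{t\<in>{0..1::real}. ?M t \<in> Uset d s}"
  let ?SL = "{t\<in>{0..1::real}. ?M t \<in> Lset d s}"
  let ?SK = "{real k / real s | k. k \<le> s}"
  have 1: "?SU \<subseteq> ?SL" using Uset_sub_Lset[OF assms(2)] by auto
  have 2: "?SL \<subseteq> ?SK"
  proof
    fix t assume "t \<in> ?SL"
    then have "0 \<le> t" "t \<le> 1" "?M t \<in> Lset d s" by auto
    from L_imp_k[OF assms(3,4,2) this(1,2) assms(5) this(3)] show "t \<in> ?SK" by auto
  qed
  have 3: "?SK \<subseteq> ?SU"
  proof
    fix t assume "t \<in> ?SK"
    then obtain k where k: "k \<le> s" and tk: "t = real k / real s" by auto
    have "0 \<le> t" using tk by simp
    moreover have "t \<le> 1" using tk k assms(2) by (simp add: divide_le_eq_1)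
    moreover have "?M t \<in> Uset d s" using k_in_Uset[OF assms(3,4,2) k] tk by simp
    ultimately show "t \<in> ?SU" by auto
  qed
  show ?thesis using 1 2 3 by blast
qed


end
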